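(* Let $\Lambda$ be a (non-degenerate) real interval. A PAF $\psi:\mathcal P^N\to\mathcal P$ is Level-SP, unanimous and strong plausibility preserving if and only if it is dictatorial, i.e. there is $i\in N$ with $\psi(\mathbf p)=p_i$ for all $\mathbf p$.
   Context: Let $N=\{1,\dots,n\}$, $\mathcal P$ the Borel probability measures on $\Lambda$, $\mathcal C$ the CDFs on $\Lambda$, $\pi(p)(a)=p(\{x\in\Lambda:x\le a\})$. A PAF is a map $\psi:\mathcal P^N\to\mathcal P$ with associated CAF $\Psi$ given by $\Psi(\pi(p_1),\dots,\pi(p_n))=\pi(\psi(p_1,\dots,p_n))$; $P_i=\pi(p_i)$. $\mathbf z_{-i}(z_i')$ is $\mathbf z$ with $i$-th coordinate replaced by $z_i'$. $\psi$ is Level-SP if for every $i$, $\mathbf P$, $P_i'$, $a$: $P_i(a)<\Psi(\mathbf P)(a)\Rightarrow\Psi(\mathbf P)(a)\le\Psi(\mathbf P_{-i}(P_i'))(a)$ and $P_i(a)>\Psi(\mathbf P)(a)\Rightarrow\Psi(\mathbf P)(a)\ge\Psi(\mathbf P_{-i}(P_i'))(a)$. $\psi$ is unanimous if $\psi(p,\dots,p)=p$. $\psi$ is strong plausibility preserving if for every profile $\mathbf p$ and every Borel set $A\subseteq\Lambda$: if $p_i(A)>0$ for all $i\in N$ then $\psi(\mathbf p)(A)>0$. *)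

theory Defs
  imports "HOL-Probability.Probability"
begin

definition probs :: "real set \<Rightarrow> real measure set" where
  "probs L = {p. prob_space p \<and> sets p = sets (restrict_space borel L)}"

definition profiles :: "real set \<Rightarrow> ('n \<Rightarrow> real measure) set" where
  "profiles L = {ps. \<forall>i. ps i \<in> probs L}"

definition cdf_of :: "real set \<Rightarrow> real measure \<Rightarrow> real \<Rightarrow> real" where
  "cdf_of L p a = measure p {x \<in> L. x \<le> a}"

definition is_PAF :: "real set \<Rightarrow> (('n \<Rightarrow> real measure) \<Rightarrow> real measure) \<Rightarrow> bool" where
  "is_PAF L \<psi> \<longleftrightarrow> (\<forall>ps \<in> profiles L. \<psi> ps \<in> probs L)"

definition level_SP :: "real set \<Rightarrow> (('n \<Rightarrow> real measure) \<Rightarrow> real measure) \<Rightarrow> bool" where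
  "level_SP L \<psi> \<longleftrightarrow>
     (\<forall>i. \<forall>ps \<in> profiles L. \<forall>q \<in> probs L. \<forall>a \<in> L.
        (cdf_of L (ps i) a < cdf_of L (\<psi> ps) a \<longrightarrow>
           cdf_of L (\<psi> ps) a \<le> cdf_of L (\<psi> (ps(i := q))) a) \<and>
        (cdf_of L (ps i) a > cdf_of L (\<psi> ps) a \<longrightarrow>
           cdf_of L (\<psi> ps) a \<ge> cdf_of L (\<psi> (ps(i := q))) a))"

definition unanimous :: "real set \<Rightarrow> (('n \<Rightarrow> real measure) \<Rightarrow> real measure) \<Rightarrow> bool" where
  "unanimous L \<psi> \<longleftrightarrow> (\<forall>p \<in> probs L. \<psi> (\<lambda>_. p) = p)"

definition strong_plausibility_preserving ::
  "real set \<Rightarrow> (('n \<Rightarrow> real measure) \<Rightarrow> real measure) \<Rightarrow> bool" where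
  "strong_plausibility_preserving L \<psi> \<longleftrightarrow>
     (\<forall>ps \<in> profiles L. \<forall>A \<in> sets (restrict_space borel L).
        (\<forall>i. measure (ps i) A > 0) \<longrightarrow> measure (\<psi> ps) A > 0)"

definition dictatorial :: "real set \<Rightarrow> (('n \<Rightarrow> real measure) \<Rightarrow> real measure) \<Rightarrow> bool" where
  "dictatorial L \<psi> \<longleftrightarrow> (\<exists>i. \<forall>ps \<in> profiles L. \<psi> ps = ps i)"

end

theory Submission
  imports Defs
begin



definition mix :: "real set \<Rightarrow> (real \<times> real) list \<Rightarrow> real measure" where
  "mix L xs = distr (measure_pmf (pmf_of_list xs)) (restrict_space borel L)
      (\<lambda>x. if x \<in> L then x else (SOME y. y \<in> L))"

lemma space_M[simp]: "space (restrict_space borel L) = (L::real set)"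
  by (simp add: space_restrict_space)

lemma mix_meas:
  assumes "L \<noteq> {}"
  shows "(\<lambda>x. if x \<in> L then x else (SOME y. y \<in> L)) \<in> measurable (measure_pmf (pmf_of_list xs)) (restrict_space borel L)"
  using assms by (auto simp: space_restrict_space split: if_splits intro: someI_ex) (metis someI_ex)

lemma mix_probs:
  assumes "L \<noteq> {}" "pmf_of_list_wf xs"
  shows "mix L xs \<in> probs L"
  unfolding probs_def mix_def
  using mix_meas[OF assms(1)] by (auto intro!: prob_space.prob_space_distr prob_space_measure_pmf)

lemma mix_measure:
  assumes "pmf_of_list_wf xs" "set (map fst xs) \<subseteq> L" "A \<in> sets (restrict_space borel L)"
  shows "measure (mix L xs) A = sum_list (map snd (filter (\<lambda>x. fst x \<in> A) xs))"
proof -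
  have L: "L \<noteq> {}" using assms(1,2) unfolding pmf_of_list_wf_def by (cases xs) auto
  have AL: "A \<subseteq> L" using sets.sets_into_space[OF assms(3)] by simp
  have "measure (mix L xs) A = measure (pmf_of_list xs) ((\<lambda>x. if x \<in> L then x else (SOME y. y \<in> L)) -` A)"
    unfolding mix_def by (subst measure_distr[OF mix_meas[OF L] assms(3)]) simp
  also have "\<dots> = sum_list (map snd (filter (\<lambda>x. fst x \<in> (\<lambda>x. if x \<in> L then x else (SOME y. y \<in> L)) -` A) xs))"
    by (rule measure_pmf_of_list[OF assms(1)])
  also have "filter (\<lambda>x. fst x \<in> (\<lambda>x. if x \<in> L then x else (SOME y. y \<in> L)) -` A) xs = filter (\<lambda>x. fst x \<in> A) xs"
    using assms(2) by (intro filter_cong) auto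
  finally show ?thesis .
qed

lemma sets_le[intro,simp]: "{x \<in> L. x \<le> a} \<in> sets (restrict_space borel (L::real set))"
  unfolding sets_restrict_space by (rule image_eqI[of _ _ "{..a}"]) auto

lemma sets_lt[intro,simp]: "{x \<in> L. x < a} \<in> sets (restrict_space borel (L::real set))"
  unfolding sets_restrict_space by (rule image_eqI[of _ _ "{..<a}"]) auto

lemma sets_Ioc[intro,simp]: "{x \<in> L. a < x \<and> x \<le> b} \<in> sets (restrict_space borel (L::real set))"
  unfolding sets_restrict_space by (rule image_eqI[of _ _ "{a<..b}"]) auto

lemma sets_single[intro,simp]: "u \<in> L \<Longrightarrow> {u} \<in> sets (restrict_space borel (L::real set))"
  unfolding sets_restrict_space by (rule image_eqI[of _ _ "{u}"]) auto

lemma mix_cdf: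
  assumes "pmf_of_list_wf xs" "set (map fst xs) \<subseteq> L"
  shows "cdf_of L (mix L xs) a = sum_list (map snd (filter (\<lambda>x. fst x \<le> a) xs))"
proof -
  have "cdf_of L (mix L xs) a = sum_list (map snd (filter (\<lambda>x. fst x \<in> {x \<in> L. x \<le> a}) xs))"
    unfolding cdf_of_def by (rule mix_measure[OF assms]) simp
  also have "filter (\<lambda>x. fst x \<in> {x \<in> L. x \<le> a}) xs = filter (\<lambda>x. fst x \<le> a) xs"
    using assms(2) by (intro filter_cong) auto
  finally show ?thesis .
qed




lemma probs_D: "p \<in> probs L \<Longrightarrow> prob_space p \<and> sets p = sets (restrict_space borel L)"
  by (simp add: probs_def)

lemma probs_space: "p \<in> probs L \<Longrightarrow> space p = L"
  using probs_D[of p L] by (metis sets_eq_imp_space_eq space_M)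

lemma cdf_mono: "p \<in> probs L \<Longrightarrow> a \<le> b \<Longrightarrow> cdf_of L p a \<le> cdf_of L p b"
  unfolding cdf_of_def using probs_D[of p L]
  by (intro finite_measure.finite_measure_mono prob_space.finite_measure) auto

lemma cdf_nonneg: "cdf_of L p a \<ge> 0"
  unfolding cdf_of_def by simp

lemma cdf_le1: "p \<in> probs L \<Longrightarrow> cdf_of L p a \<le> 1"
  unfolding cdf_of_def using probs_D[of p L] by (auto intro: prob_space.prob_le_1)

locale agg =
  fixes L :: "real set" and \<psi> :: "('n::finite \<Rightarrow> real measure) \<Rightarrow> real measure"
  assumes ivl: "is_interval L" and PAF: "is_PAF L \<psi>" and LSP: "level_SP L \<psi>"
    and UN: "unanimous L \<psi>" and SPP: "strong_plausibility_preserving L \<psi>"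
begin

abbreviation F :: "real measure \<Rightarrow> real \<Rightarrow> real" where "F p a \<equiv> cdf_of L p a"

lemma prof_upd: "ps \<in> profiles L \<Longrightarrow> q \<in> probs L \<Longrightarrow> ps(i:=q) \<in> profiles L"
  by (auto simp: profiles_def)

lemma prof_D: "ps \<in> profiles L \<Longrightarrow> ps i \<in> probs L"
  by (auto simp: profiles_def)

lemma prof_I: "(\<And>i. ps i \<in> probs L) \<Longrightarrow> ps \<in> profiles L"
  by (auto simp: profiles_def)

lemma psi_probs: "ps \<in> profiles L \<Longrightarrow> \<psi> ps \<in> probs L"
  using PAF by (auto simp: is_PAF_def)

lemma LSP1: "ps \<in> profiles L \<Longrightarrow> q \<in> probs L \<Longrightarrow> a \<in> L \<Longrightarrow>
   F (ps i) a < F (\<psi> ps) a \<Longrightarrow> F (\<psi> ps) a \<le> F (\<psi> (ps(i:=q))) a"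
  using LSP unfolding level_SP_def by blast

lemma LSP2: "ps \<in> profiles L \<Longrightarrow> q \<in> probs L \<Longrightarrow> a \<in> L \<Longrightarrow>
   F (ps i) a > F (\<psi> ps) a \<Longrightarrow> F (\<psi> ps) a \<ge> F (\<psi> (ps(i:=q))) a"
  using LSP unfolding level_SP_def by blast

definition ok :: "real \<Rightarrow> real \<Rightarrow> real \<Rightarrow> bool" where
  "ok s x y \<longleftrightarrow> (x < s \<and> y < s) \<or> (x > s \<and> y > s) \<or> x = y"

lemma T2_one:
  assumes ps: "ps \<in> profiles L" and q: "q \<in> probs L" and a: "a \<in> L"
    and c: "ok (F (\<psi> ps) a) (F (ps i) a) (F q a)"
  shows "F (\<psi> (ps(i:=q))) a = F (\<psi> ps) a"
proof -
  let ?s = "F (\<psi> ps) a" and ?pp = "ps(i:=q)"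
  have ps': "?pp \<in> profiles L" using prof_upd[OF ps q] .
  have bk: "?pp(i := ps i) = ps" by simp
  have pi: "ps i \<in> probs L" using prof_D[OF ps] .
  have B1: "F (?pp i) a < F (\<psi> ?pp) a \<Longrightarrow> F (\<psi> ?pp) a \<le> ?s"
    using LSP1[OF ps' pi a, of i] bk by simp
  have B2: "F (?pp i) a > F (\<psi> ?pp) a \<Longrightarrow> F (\<psi> ?pp) a \<ge> ?s"
    using LSP2[OF ps' pi a, of i] bk by simp
  have A1: "F (ps i) a < ?s \<Longrightarrow> ?s \<le> F (\<psi> ?pp) a" using LSP1[OF ps q a] .
  have A2: "F (ps i) a > ?s \<Longrightarrow> ?s \<ge> F (\<psi> ?pp) a" using LSP2[OF ps q a] .
  show ?thesis using c A1 A2 B1 B2 unfolding ok_def by auto (smt (verit))+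
qed

lemma T2:
  assumes ps: "ps \<in> profiles L" and qs: "qs \<in> profiles L" and a: "a \<in> L"
    and c: "\<And>i. ok (F (\<psi> ps) a) (F (ps i) a) (F (qs i) a)"
  shows "F (\<psi> qs) a = F (\<psi> ps) a"
proof -
  define r where "r S = (\<lambda>i. if i \<in> S then qs i else ps i)" for S
  have rp: "r S \<in> profiles L" for S using ps qs by (auto simp: r_def profiles_def)
  have "F (\<psi> (r S)) a = F (\<psi> ps) a" if "finite S" for S
    using that
  proof (induction S rule: finite_induct)
    case empty
    then show ?case by (simp add: r_def)
  next
    case (insert j S)
    have eq: "r (insert j S) = (r S)(j := qs j)" by (auto simp: r_def)
    have rj: "r S j = ps j" using insert by (simp add: r_def)
    have "F (\<psi> ((r S)(j := qs j))) a = F (\<psi> (r S)) a"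
      using T2_one[OF rp[of S] prof_D[OF qs] a, of j] c[of j] insert.IH rj by simp
    then show ?case using insert.IH by (simp only: eq)
  qed
  moreover have "r UNIV = qs" by (simp add: r_def)
  ultimately show ?thesis by (metis finite)
qed

lemma locality:
  assumes "ps \<in> profiles L" "qs \<in> profiles L" "a \<in> L" "\<And>i. F (ps i) a = F (qs i) a"
  shows "F (\<psi> qs) a = F (\<psi> ps) a"
  using assms by (intro T2) (auto simp: ok_def)

lemma T4_up:
  assumes ps: "ps \<in> profiles L" and a: "a \<in> L"
  shows "\<exists>i. F (ps i) a \<ge> F (\<psi> ps) a"
proof (rule ccontr)
  assume "\<not> ?thesis"
  then have lt: "\<And>i. F (ps i) a < F (\<psi> ps) a" using not_le by blast
  fix k :: 'n
  let ?qs = "\<lambda>_::'n. ps k"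
  have qs: "?qs \<in> profiles L" using prof_D[OF ps] by (auto simp: profiles_def)
  have "\<psi> ?qs = ps k" using UN prof_D[OF ps, of k] by (auto simp: unanimous_def)
  moreover have "F (\<psi> ?qs) a = F (\<psi> ps) a"
    using lt by (intro T2[OF ps qs a]) (auto simp: ok_def)
  ultimately show False using lt[of k] by simp
qed

lemma T4_down:
  assumes ps: "ps \<in> profiles L" and a: "a \<in> L"
  shows "\<exists>i. F (ps i) a \<le> F (\<psi> ps) a"
proof (rule ccontr)
  assume "\<not> ?thesis"
  then have lt: "\<And>i. F (ps i) a > F (\<psi> ps) a" using not_le by blast
  fix k :: 'n
  let ?qs = "\<lambda>_::'n. ps k"
  have qs: "?qs \<in> profiles L" using prof_D[OF ps] by (auto simp: profiles_def)
  have "\<psi> ?qs = ps k" using UN prof_D[OF ps, of k] by (auto simp: unanimous_def)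
  moreover have "F (\<psi> ?qs) a = F (\<psi> ps) a"
    using lt by (intro T2[OF ps qs a]) (auto simp: ok_def)
  ultimately show False using lt[of k] by simp
qed

lemma pinned:
  assumes ps: "ps \<in> profiles L" and a: "a \<in> L" and t: "\<And>i. F (ps i) a = t"
  shows "F (\<psi> ps) a = t"
  using T4_up[OF ps a] T4_down[OF ps a] t by force

end



lemma probs_fm: "p \<in> probs L \<Longrightarrow> finite_measure p"
  using probs_D[of p L] by (auto intro: prob_space.finite_measure)

lemma probs_sets: "p \<in> probs L \<Longrightarrow> sets p = sets (restrict_space borel L)"
  using probs_D[of p L] by auto

lemma right_cont:
  assumes p: "p \<in> probs L" and lt: "cdf_of L p a < h"
  shows "\<exists>n. cdf_of L p (a + 1 / Suc n) < h"
proof -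
  interpret finite_measure p using probs_fm[OF p] .
  let ?A = "\<lambda>n::nat. {x \<in> L. x \<le> a + 1 / Suc n}"
  have "range ?A \<subseteq> sets p" using probs_sets[OF p] by auto
  moreover have "decseq ?A"
    unfolding decseq_def by (auto simp: frac_le order_trans)
  ultimately have lim: "(\<lambda>n. measure p (?A n)) \<longlonglongrightarrow> measure p (\<Inter>n. ?A n)"
    by (rule finite_Lim_measure_decseq)
  have "(\<Inter>n. ?A n) = {x \<in> L. x \<le> a}"
  proof (auto)
    fix x assume x: "\<forall>n. x \<le> a + 1 / (1 + real n)"
    show "x \<le> a"
    proof (rule ccontr)
      assume "\<not> x \<le> a"
      then have "x - a > 0" by simp
      from reals_Archimedean[OF this] obtain n where "inverse (real (Suc n)) < x - a" ..
      then have "1 / (1 + real n) < x - a" by (simp add: inverse_eq_divide add.commute)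
      with x[rule_format, of n] show False by simp
    qed
  next
    fix x n assume "x \<le> a"
    then show "x \<le> a + 1 / (1 + real n)"
      by (smt (verit) divide_nonneg_nonneg of_nat_0_le_iff)
  qed
  with lim have "(\<lambda>n. cdf_of L p (a + 1 / Suc n)) \<longlonglongrightarrow> cdf_of L p a"
    by (simp add: cdf_of_def)
  from order_tendstoD(2)[OF this lt] obtain N where "\<forall>n\<ge>N. cdf_of L p (a + 1 / Suc n) < h"
    by (auto simp: eventually_sequentially)
  then show ?thesis by blast
qed

lemma left_meas:
  assumes p: "p \<in> probs L" and q: "q \<in> probs L"
    and eq: "\<And>x. x < u \<Longrightarrow> cdf_of L p x = cdf_of L q x"
  shows "measure p {x \<in> L. x < u} = measure q {x \<in> L. x < u}"
proof -
  let ?A = "\<lambda>n::nat. {x \<in> L. x \<le> u - 1 / Suc n}"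
  have inc: "incseq ?A"
    unfolding incseq_def
  proof (intro allI impI subsetI)
    fix m n :: nat and x assume mn: "m \<le> n" and x: "x \<in> ?A m"
    have "1 / real (Suc n) \<le> 1 / real (Suc m)" using mn by (intro divide_left_mono) auto
    then show "x \<in> ?A n" using x by auto
  qed
  have un: "(\<Union>n. ?A n) = {x \<in> L. x < u}"
  proof (auto)
    fix x n assume "x \<le> u - 1 / (1 + real n)"
    moreover have "1 / (1 + real n) > 0" by simp
    ultimately show "x < u" by linarith
  next
    fix x assume "x < u"
    then have "u - x > 0" by simp
    from reals_Archimedean[OF this] obtain n where "inverse (real (Suc n)) < u - x" ..
    then have "1 / (1 + real n) < u - x" by (simp add: inverse_eq_divide add.commute)
    then show "\<exists>n. x \<le> u - 1 / (1 + real n)" by (intro exI[of _ n]) simp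
  qed
  have lp: "(\<lambda>n. measure p (?A n)) \<longlonglongrightarrow> measure p {x \<in> L. x < u}"
    using finite_measure.finite_Lim_measure_incseq[OF probs_fm[OF p], of ?A] inc un probs_sets[OF p]
    by auto
  have lq: "(\<lambda>n. measure q (?A n)) \<longlonglongrightarrow> measure q {x \<in> L. x < u}"
    using finite_measure.finite_Lim_measure_incseq[OF probs_fm[OF q], of ?A] inc un probs_sets[OF q]
    by auto
  have "measure p (?A n) = measure q (?A n)" for n
  proof -
    have "u - 1 / Suc n < u" by simp
    from eq[OF this] show ?thesis unfolding cdf_of_def .
  qed
  then have "(\<lambda>n. measure q (?A n)) \<longlonglongrightarrow> measure p {x \<in> L. x < u}" using lp by simp
  from LIMSEQ_unique[OF this lq] show ?thesis .
qed

lemma atom_meas: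
  assumes p: "p \<in> probs L" and u: "u \<in> L"
  shows "measure p {u} = cdf_of L p u - measure p {x \<in> L. x < u}"
proof -
  interpret finite_measure p using probs_fm[OF p] .
  have "{x \<in> L. x \<le> u} = {x \<in> L. x < u} \<union> {u}" using u by auto
  moreover have "measure p ({x \<in> L. x < u} \<union> {u}) = measure p {x \<in> L. x < u} + measure p {u}"
    using probs_sets[OF p] u by (intro finite_measure_Union) auto
  ultimately have "cdf_of L p u = measure p {x \<in> L. x < u} + measure p {u}"
    unfolding cdf_of_def by simp
  then show ?thesis by simp
qed




lemma ivl_mem: "is_interval L \<Longrightarrow> x \<in> L \<Longrightarrow> y \<in> L \<Longrightarrow> x \<le> z \<Longrightarrow> z \<le> y \<Longrightarrow> (z::real) \<in> L"
  by (rule mem_is_interval_1_I)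

lemma wf2: "0 \<le> p \<Longrightarrow> 0 \<le> q \<Longrightarrow> p + q = 1 \<Longrightarrow> pmf_of_list_wf [(a,p),(c,q)]"
  by (simp add: pmf_of_list_wf_def)

lemma wf3: "0 \<le> p \<Longrightarrow> 0 \<le> q \<Longrightarrow> 0 \<le> r \<Longrightarrow> p + q + r = 1 \<Longrightarrow> pmf_of_list_wf [(a,p),(b,q),(c,r)]"
  by (simp add: pmf_of_list_wf_def add.assoc[symmetric])

context agg begin

lemma SPP_D: "ps \<in> profiles L \<Longrightarrow> A \<in> sets (restrict_space borel L) \<Longrightarrow> (\<And>i. measure (ps i) A > 0)
   \<Longrightarrow> measure (\<psi> ps) A > 0"
  using SPP unfolding strong_plausibility_preserving_def by blast

definition rp2 :: "real \<Rightarrow> real \<Rightarrow> ('n \<Rightarrow> real) \<Rightarrow> 'n \<Rightarrow> real measure" where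
  "rp2 a c v = (\<lambda>i. mix L [(a, v i), (c, 1 - v i)])"

lemma rp2_prof: "a \<in> L \<Longrightarrow> c \<in> L \<Longrightarrow> (\<And>i. 0 \<le> v i \<and> v i \<le> 1) \<Longrightarrow> rp2 a c v \<in> profiles L"
  unfolding rp2_def by (intro prof_I mix_probs wf2) auto

lemma rp2_cdf: "a \<in> L \<Longrightarrow> c \<in> L \<Longrightarrow> a < c \<Longrightarrow> 0 \<le> v i \<Longrightarrow> v i \<le> 1 \<Longrightarrow>
   F (rp2 a c v i) x = (if x < a then 0 else if x < c then v i else 1)"
  unfolding rp2_def by (subst mix_cdf[OF wf2]) auto

lemma C1:
  assumes ps: "ps \<in> profiles L" and a: "a \<in> L" and c: "c \<in> L" and ac: "a < c"
  shows "\<exists>i. F (\<psi> ps) a = F (ps i) a"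
proof (rule ccontr)
  assume H: "\<not> ?thesis"
  define t where "t = F (\<psi> ps) a"
  define v where "v i = F (ps i) a" for i
  have ne: "\<And>i. v i \<noteq> t" using H unfolding v_def t_def by metis
  obtain j where "v j \<ge> t" using T4_up[OF ps a] by (auto simp: v_def t_def)
  hence vj: "v j > t" using ne[of j] by auto
  have v0: "0 \<le> v i" for i unfolding v_def by (rule cdf_nonneg)
  have v1: "v i \<le> 1" for i unfolding v_def by (rule cdf_le1[OF prof_D[OF ps]])
  have t1: "t < 1" using vj v1[of j] by simp
  have t0: "0 \<le> t" unfolding t_def by (rule cdf_nonneg)
  define h where "h = (t + 1) / 2"
  have ht: "t < h" "h < 1" using t1 by (auto simp: h_def)
  define v' where "v' i = (if v i < t then v i else h)" for i
  have v'01: "0 \<le> v' i \<and> v' i \<le> 1" for i using v0[of i] v1[of i] ht t0 by (auto simp: v'_def)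
  have v'cases: "v' i < t \<or> v' i = h" for i by (auto simp: v'_def)
  define Q where "Q = rp2 a c v'"
  have Q: "Q \<in> profiles L" unfolding Q_def by (rule rp2_prof[OF a c v'01])
  have Qcdf: "F (Q i) x = (if x < a then 0 else if x < c then v' i else 1)" for i x
    unfolding Q_def using rp2_cdf[OF a c ac] v'01[of i] by blast
  have Qa: "F (\<psi> Q) a = t"
    unfolding t_def
  proof (rule T2[OF ps Q a])
    fix i
    show "ok (F (\<psi> ps) a) (F (ps i) a) (F (Q i) a)"
      using ne[of i] ht unfolding ok_def Qcdf v'_def v_def[symmetric] t_def[symmetric] using ac
      by auto
  qed
  obtain n where n: "F (\<psi> Q) (a + 1 / Suc n) < h"
    using right_cont[OF psi_probs[OF Q], of a h] Qa ht by auto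
  define \<delta> where "\<delta> = min (1 / Suc n) ((c - a) / 2)"
  have \<delta>: "0 < \<delta>" "a + \<delta> < c" "\<delta> \<le> 1 / Suc n" using ac unfolding \<delta>_def by (auto simp: min_def field_simps)
  have unc: "uncountable {a<..<a+\<delta>}" using \<delta> by (simp add: uncountable_open_interval)
  have cnt: "countable {x. measure (\<psi> Q) {x} \<noteq> 0}"
    using finite_measure.countable_support[OF probs_fm[OF psi_probs[OF Q]]] .
  have "\<not> {a<..<a+\<delta>} \<subseteq> {x. measure (\<psi> Q) {x} \<noteq> 0}"
    using unc cnt countable_subset by blast
  then obtain u where u: "a < u" "u < a + \<delta>" and u0: "measure (\<psi> Q) {u} = 0" by auto
  have uL: "u \<in> L" using ivl_mem[OF ivl a c, of u] u \<delta> by auto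
  have uc: "u < c" using u \<delta> by auto
  define s where "s = F (\<psi> Q) u"
  have ts: "t \<le> s" unfolding s_def Qa[symmetric] using u by (intro cdf_mono psi_probs Q) auto
  have "s \<le> F (\<psi> Q) (a + 1 / Suc n)" unfolding s_def using u \<delta> by (intro cdf_mono psi_probs Q) auto
  with n have sh: "s < h" by simp
  define e where "e i = (if v' i < t then (s - v' i) / 2 else (1 - h) / 2)" for i
  define \<epsilon> where "\<epsilon> = Min (range e)"
  have epos: "0 < e i" for i using ts ht by (auto simp: e_def)
  have \<epsilon>pos: "0 < \<epsilon>" unfolding \<epsilon>_def using epos by (subst Min_gr_iff) auto
  have \<epsilon>le: "\<epsilon> \<le> e i" for i unfolding \<epsilon>_def by (rule Min_le) auto
  have R3: "0 \<le> 1 - v' i - \<epsilon>" and Rb: "v' i < t \<Longrightarrow> v' i + \<epsilon> < s" for i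
    using \<epsilon>le[of i] v'cases[of i] ts ht sh \<epsilon>pos v'01[of i] by (auto simp: e_def split: if_splits)
  define R where "R = (\<lambda>i. mix L [(a, v' i), (u, \<epsilon>), (c, 1 - v' i - \<epsilon>)])"
  have wfR: "pmf_of_list_wf [(a, v' i), (u, \<epsilon>), (c, 1 - v' i - \<epsilon>)]" for i
    using v'01[of i] \<epsilon>pos R3[of i] by (intro wf3) auto
  have R: "R \<in> profiles L" unfolding R_def
    using a uL c wfR by (intro prof_I mix_probs) auto
  have Rcdf: "F (R i) x = (if x < a then 0 else if x < u then v' i else if x < c then v' i + \<epsilon> else 1)" for i x
    unfolding R_def using a uL c u uc by (subst mix_cdf[OF wfR]) auto
  have Ru: "F (\<psi> R) u = s"
    unfolding s_def
  proof (rule T2[OF Q R uL])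
    fix i
    show "ok (F (\<psi> Q) u) (F (Q i) u) (F (R i) u)"
      unfolding Qcdf Rcdf s_def[symmetric] ok_def using u uc v'cases[of i] Rb[of i] ts sh \<epsilon>pos
      by auto
  qed
  have below: "F (\<psi> R) x = F (\<psi> Q) x" if x: "x < u" for x
  proof (cases "x \<in> L")
    case True
    show ?thesis
      by (rule locality[OF Q R True]) (use x uc in \<open>simp add: Qcdf Rcdf\<close>)
  next
    case False
    have "{y \<in> L. y \<le> x} = {}" using False x ivl_mem[OF ivl _ uL, of _ x] by auto
    then show ?thesis unfolding cdf_of_def by (simp only:) simp
  qed
  have "measure (\<psi> R) {x \<in> L. x < u} = measure (\<psi> Q) {x \<in> L. x < u}"
    by (rule left_meas[OF psi_probs[OF R] psi_probs[OF Q] below])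
  then have "measure (\<psi> R) {u} = 0"
    using atom_meas[OF psi_probs[OF R] uL] atom_meas[OF psi_probs[OF Q] uL] Ru u0 s_def by simp
  moreover have "measure (\<psi> R) {u} > 0"
  proof (rule SPP_D[OF R sets_single[OF uL]])
    fix i
    have "measure (R i) {u} = \<epsilon>"
      unfolding R_def using a uL c u uc by (subst mix_measure[OF wfR]) auto
    then show "measure (R i) {u} > 0" using \<epsilon>pos by simp
  qed
  ultimately show False by simp
qed

end



lemma mix2_cdf: "a \<in> L \<Longrightarrow> c \<in> L \<Longrightarrow> a < c \<Longrightarrow> 0 \<le> p \<Longrightarrow> p \<le> 1 \<Longrightarrow>
   cdf_of L (mix L [(a, p), (c, 1 - p)]) x = (if x < a then 0 else if x < c then p else 1)"
  by (subst mix_cdf[OF wf2]) auto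

lemma mix2_probs: "a \<in> L \<Longrightarrow> c \<in> L \<Longrightarrow> 0 \<le> p \<Longrightarrow> p \<le> 1 \<Longrightarrow> mix L [(a, p), (c, 1 - p)] \<in> probs L"
  by (intro mix_probs wf2) auto

lemma mix2_measure: "a \<in> L \<Longrightarrow> c \<in> L \<Longrightarrow> 0 \<le> p \<Longrightarrow> p \<le> 1 \<Longrightarrow> A \<in> sets (restrict_space borel L) \<Longrightarrow>
   measure (mix L [(a, p), (c, 1 - p)]) A = (if a \<in> A then p else 0) + (if c \<in> A then 1 - p else 0)"
  by (subst mix_measure[OF wf2]) auto

lemma mixh_probs: "a \<in> L \<Longrightarrow> c \<in> L \<Longrightarrow> mix L [(a, 1/2), (c, 1/2)] \<in> probs L"
  by (intro mix_probs wf2) auto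

lemma mixh_cdf: "a \<in> L \<Longrightarrow> c \<in> L \<Longrightarrow> a < c \<Longrightarrow>
   cdf_of L (mix L [(a, 1/2), (c, 1/2)]) x = (if x < a then 0 else if x < c then 1/2 else 1)"
  by (subst mix_cdf[OF wf2]) auto

lemma mixh_measure: "a \<in> L \<Longrightarrow> c \<in> L \<Longrightarrow> A \<in> sets (restrict_space borel L) \<Longrightarrow>
   measure (mix L [(a, 1/2), (c, 1/2)]) A = (if a \<in> A then 1/2 else 0) + (if c \<in> A then 1/2 else 0)"
  by (subst mix_measure[OF wf2]) auto

lemma Ioc_meas: "p \<in> probs L \<Longrightarrow> x \<le> y \<Longrightarrow>
   measure p {z \<in> L. x < z \<and> z \<le> y} = cdf_of L p y - cdf_of L p x"
proof -
  assume p: "p \<in> probs L" and xy: "x \<le> y"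
  interpret finite_measure p using probs_fm[OF p] .
  have "{z \<in> L. x < z \<and> z \<le> y} = {z \<in> L. z \<le> y} - {z \<in> L. z \<le> x}" using xy by auto
  moreover have "measure p ({z \<in> L. z \<le> y} - {z \<in> L. z \<le> x}) = measure p {z \<in> L. z \<le> y} - measure p {z \<in> L. z \<le> x}"
    using probs_sets[OF p] xy by (intro finite_measure_Diff) auto
  ultimately show ?thesis unfolding cdf_of_def by simp
qed

lemma meas_Un: "p \<in> probs L \<Longrightarrow> A \<in> sets (restrict_space borel L) \<Longrightarrow> B \<in> sets (restrict_space borel L) \<Longrightarrow>
   A \<inter> B = {} \<Longrightarrow> measure p (A \<union> B) = measure p A + measure p B"
  using finite_measure.finite_measure_Union[OF probs_fm, of p L A B] probs_sets[of p L] by simp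

context agg begin

definition low :: "real \<Rightarrow> bool" where "low a \<longleftrightarrow> a \<in> L \<and> (\<exists>c\<in>L. a < c)"

definition ind :: "'n set \<Rightarrow> 'n \<Rightarrow> real" where "ind S i = (if i \<in> S then 1 else 0)"

definition W :: "real \<Rightarrow> 'n set \<Rightarrow> bool" where
  "W a S \<longleftrightarrow> (\<exists>ps\<in>profiles L. (\<forall>i. F (ps i) a = ind S i) \<and> F (\<psi> ps) a = 1)"

lemma C1': "low a \<Longrightarrow> ps \<in> profiles L \<Longrightarrow> \<exists>i. F (\<psi> ps) a = F (ps i) a"
  unfolding low_def using C1 by blast

lemma BIN:
  assumes a: "low a" and ps: "ps \<in> profiles L" and c: "\<And>i. F (ps i) a = ind S i"
  shows "F (\<psi> ps) a = (if W a S then 1 else 0)"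
proof (cases "W a S")
  case True
  then obtain qs where qs: "qs \<in> profiles L" "\<And>i. F (qs i) a = ind S i" "F (\<psi> qs) a = 1"
    unfolding W_def by blast
  have "F (\<psi> ps) a = F (\<psi> qs) a" using a c qs by (intro locality[OF qs(1) ps]) (auto simp: low_def)
  with qs True show ?thesis by simp
next
  case False
  obtain i where i: "F (\<psi> ps) a = F (ps i) a" using C1'[OF a ps] by blast
  have "F (\<psi> ps) a \<noteq> 1" using False ps c unfolding W_def by blast
  with i c[of i] False show ?thesis by (auto simp: ind_def split: if_splits)
qed

definition bp :: "real \<Rightarrow> real \<Rightarrow> 'n set \<Rightarrow> 'n \<Rightarrow> real measure" where
  "bp a c S = rp2 a c (ind S)"

lemma bp_prof: "a \<in> L \<Longrightarrow> c \<in> L \<Longrightarrow> bp a c S \<in> profiles L"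
  unfolding bp_def by (intro rp2_prof) (auto simp: ind_def)

lemma bp_cdf: "a \<in> L \<Longrightarrow> c \<in> L \<Longrightarrow> a < c \<Longrightarrow>
   F (bp a c S i) x = (if x < a then 0 else if x < c then ind S i else 1)"
  unfolding bp_def by (intro rp2_cdf) (auto simp: ind_def)

lemma bp_val:
  assumes "a \<in> L" "c \<in> L" "a \<le> b" "b < c"
  shows "F (\<psi> (bp a c S)) b = (if W b S then 1 else 0)"
proof -
  have "low b" using assms ivl_mem[OF ivl, of a c b] by (auto simp: low_def)
  then show ?thesis using assms by (intro BIN bp_prof) (auto simp: bp_cdf)
qed

lemma W_up:
  assumes a: "low a" and b: "low b" and ab: "a < b" and W: "W a S"
  shows "W b S"
proof -
  obtain c where c: "c \<in> L" "b < c" using b by (auto simp: low_def)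
  have aL: "a \<in> L" using a by (auto simp: low_def)
  let ?ps = "bp a c S"
  have "F (\<psi> ?ps) a = 1" using bp_val[OF aL c(1), of a] ab c W by simp
  moreover have "F (\<psi> ?ps) a \<le> F (\<psi> ?ps) b" using ab by (intro cdf_mono psi_probs bp_prof aL c) auto
  moreover have "F (\<psi> ?ps) b \<le> 1" by (intro cdf_le1 psi_probs bp_prof aL c)
  ultimately have "F (\<psi> ?ps) b = 1" by simp
  moreover have "F (?ps i) b = ind S i" for i using ab c aL by (simp add: bp_cdf)
  ultimately show ?thesis unfolding W_def using bp_prof[OF aL c(1)] by blast
qed

end



context agg begin

lemma K1:
  assumes z: "z0 \<in> L" "z1 \<in> L" "z2 \<in> L" "z3 \<in> L" "z0 < z1" "z1 < z2" "z2 < z3"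
  shows "W z0 S \<longleftrightarrow> \<not> W z2 (- S)"
proof -
  define P where "P i = (if i \<in> S then mix L [(z0, 1/2), (z3, 1/2)] else mix L [(z1, 1/2), (z2, 1/2)])" for i
  have P: "P \<in> profiles L" unfolding P_def using z by (intro prof_I) (auto intro: mixh_probs)
  have Pc: "F (P i) x = (if i \<in> S then (if x < z0 then 0 else if x < z3 then 1/2 else 1)
                                else (if x < z1 then 0 else if x < z2 then 1/2 else 1))" for i x
    unfolding P_def using z by (auto simp: mixh_cdf)
  have low0: "low z0" and low2: "low z2" using z by (auto simp: low_def)
  have v1: "F (\<psi> P) z1 = 1/2" by (rule pinned[OF P z(2)]) (use z in \<open>auto simp: Pc\<close>)
  have v3: "F (\<psi> P) z3 = 1" by (rule pinned[OF P z(4)]) (use z in \<open>auto simp: Pc\<close>)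
  have v0: "F (\<psi> P) z0 = (if W z0 S then 1/2 else 0)"
  proof -
    obtain i where i: "F (\<psi> P) z0 = F (P i) z0" using C1'[OF low0 P] by blast
    have B: "F (\<psi> (bp z0 z3 S)) z0 = (if W z0 S then 1 else 0)" using bp_val[OF z(1) z(4)] z by simp
    have c1: "F (\<psi> P) z0 = 0 \<Longrightarrow> \<not> W z0 S"
    proof -
      assume h: "F (\<psi> P) z0 = 0"
      have "F (\<psi> (bp z0 z3 S)) z0 = F (\<psi> P) z0"
        by (rule T2[OF P bp_prof[OF z(1) z(4)] z(1)]) (use z h in \<open>auto simp: ok_def Pc bp_cdf ind_def\<close>)
      with h B show ?thesis by (auto split: if_splits)
    qed
    have c2: "F (\<psi> P) z0 = 1/2 \<Longrightarrow> W z0 S"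
    proof (rule ccontr)
      assume h: "F (\<psi> P) z0 = 1/2" "\<not> W z0 S"
      have "F (\<psi> P) z0 = F (\<psi> (bp z0 z3 S)) z0"
        by (rule T2[OF bp_prof[OF z(1) z(4)] P z(1)]) (use z h B in \<open>auto simp: ok_def Pc bp_cdf ind_def\<close>)
      with h B show False by simp
    qed
    have "F (\<psi> P) z0 = 0 \<or> F (\<psi> P) z0 = 1/2" using i z by (auto simp: Pc split: if_splits)
    with c1 c2 show ?thesis by auto
  qed
  have v2: "F (\<psi> P) z2 = (if W z2 (-S) then 1 else 1/2)"
  proof -
    obtain i where i: "F (\<psi> P) z2 = F (P i) z2" using C1'[OF low2 P] by blast
    have B: "F (\<psi> (bp z2 z3 (-S))) z2 = (if W z2 (-S) then 1 else 0)" using bp_val[OF z(3) z(4)] z by simp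
    have c1: "F (\<psi> P) z2 = 1 \<Longrightarrow> W z2 (-S)"
    proof -
      assume h: "F (\<psi> P) z2 = 1"
      have "F (\<psi> (bp z2 z3 (-S))) z2 = F (\<psi> P) z2"
        by (rule T2[OF P bp_prof[OF z(3) z(4)] z(3)]) (use z h in \<open>auto simp: ok_def Pc bp_cdf ind_def\<close>)
      with h B show ?thesis by (auto split: if_splits)
    qed
    have c2: "W z2 (-S) \<Longrightarrow> F (\<psi> P) z2 = 1"
    proof -
      assume h: "W z2 (-S)"
      have "F (\<psi> P) z2 = F (\<psi> (bp z2 z3 (-S))) z2"
        by (rule T2[OF bp_prof[OF z(3) z(4)] P z(3)]) (use z h B in \<open>auto simp: ok_def Pc bp_cdf ind_def\<close>)
      with h B show ?thesis by simp
    qed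
    have "F (\<psi> P) z2 = 1/2 \<or> F (\<psi> P) z2 = 1" using i z by (auto simp: Pc split: if_splits)
    with c1 c2 show ?thesis by auto
  qed
  have pP: "\<psi> P \<in> probs L" by (rule psi_probs[OF P])
  define A1 where "A1 = {x \<in> L. x \<le> z0} \<union> {x \<in> L. z1 < x \<and> x \<le> z2}"
  define A2 where "A2 = {x \<in> L. z0 < x \<and> x \<le> z1} \<union> {x \<in> L. z2 < x \<and> x \<le> z3}"
  have A1s: "A1 \<in> sets (restrict_space borel L)" unfolding A1_def by (intro sets.Un) auto
  have A2s: "A2 \<in> sets (restrict_space borel L)" unfolding A2_def by (intro sets.Un) auto
  have m1: "measure (\<psi> P) A1 = F (\<psi> P) z0 + (F (\<psi> P) z2 - F (\<psi> P) z1)"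
    unfolding A1_def using z
    by (subst meas_Un[OF pP]) (auto simp: Ioc_meas[OF pP] cdf_of_def)
  have m2: "measure (\<psi> P) A2 = (F (\<psi> P) z1 - F (\<psi> P) z0) + (F (\<psi> P) z3 - F (\<psi> P) z2)"
    unfolding A2_def using z
    by (subst meas_Un[OF pP]) (auto simp: Ioc_meas[OF pP])
  have "measure (\<psi> P) A1 > 0"
  proof (rule SPP_D[OF P A1s])
    fix i show "measure (P i) A1 > 0"
      unfolding P_def using z A1s by (auto simp: mixh_measure A1_def)
  qed
  moreover have "measure (\<psi> P) A2 > 0"
  proof (rule SPP_D[OF P A2s])
    fix i show "measure (P i) A2 > 0"
      unfolding P_def using z A2s by (auto simp: mixh_measure A2_def)
  qed
  ultimately show ?thesis using m1 m2 v0 v1 v2 v3 by (auto split: if_splits)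
qed

end



context agg begin

lemma pts:
  assumes u: "u \<in> L" and c: "c \<in> L" and uc: "u < c"
  defines "z \<equiv> \<lambda>k::nat. u + real k * (c - u) / 6"
  shows "\<And>k. k \<le> 6 \<Longrightarrow> z k \<in> L" "\<And>k l. k < l \<Longrightarrow> z k < z l" "z 0 = u" "z 6 = c"
proof -
  fix k :: nat assume "k \<le> 6"
  have "real k * (c - u) \<le> 6 * (c - u)" using \<open>k \<le> 6\<close> uc by (intro mult_right_mono) auto
  moreover have "0 \<le> real k * (c - u)" using uc by simp
  ultimately have "z k \<ge> u" "z k \<le> c" using uc unfolding z_def by (auto simp: field_simps)
  then show "z k \<in> L" using ivl_mem[OF ivl u c] by blast
next
  fix k l :: nat assume "k < l"
  then have "real k * (c - u) < real l * (c - u)" using uc by (intro mult_strict_right_mono) auto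
  then show "z k < z l" unfolding z_def by (simp add: divide_strict_right_mono)
qed (auto simp: z_def field_simps)

lemma excl:
  assumes u: "low u"
  shows "W u S \<longleftrightarrow> \<not> W u (- S)"
proof -
  obtain c where uL: "u \<in> L" and c: "c \<in> L" "u < c" using u by (auto simp: low_def)
  define z where "z = (\<lambda>k::nat. u + real k * (c - u) / 6)"
  have zL: "\<And>k. k \<le> 6 \<Longrightarrow> z k \<in> L" and zlt: "\<And>k l. k < l \<Longrightarrow> z k < z l" and z0: "z 0 = u"
    using pts[OF uL c] unfolding z_def by auto
  have lowz: "k < 6 \<Longrightarrow> low (z k)" for k using zL[of k] zL[of 6] zlt[of k 6] by (auto simp: low_def)
  have k1: "W u S' \<longleftrightarrow> \<not> W (z 2) (- S')" for S'
    using K1[OF zL[of 0] zL[of 1] zL[of 2] zL[of 3] zlt[of 0 1] zlt[of 1 2] zlt[of 2 3]] z0 by simp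
  have k2: "W (z 2) S' \<longleftrightarrow> \<not> W (z 4) (- S')" for S'
    using K1[OF zL[of 2] zL[of 3] zL[of 4] zL[of 5] zlt[of 2 3] zlt[of 3 4] zlt[of 4 5]] by simp
  have up02: "W u S' \<Longrightarrow> W (z 2) S'" for S' using W_up[OF u lowz[of 2]] zlt[of 0 2] z0 by simp
  have up24: "W (z 2) S' \<Longrightarrow> W (z 4) S'" for S' using W_up[OF lowz[of 2] lowz[of 4]] zlt[of 2 4] by simp
  have a1: "W u S \<longleftrightarrow> \<not> W (z 2) (-S)" by (rule k1)
  have a2: "W u (-S) \<longleftrightarrow> \<not> W (z 2) S" using k1[of "-S"] by simp
  have a3: "W (z 2) S \<longleftrightarrow> \<not> W (z 4) (-S)" by (rule k2)
  show ?thesis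
    using a1 a2 a3 up02[of "-S"] up24[of "-S"] by blast
qed

lemma W_const:
  assumes u: "low u" and u': "low u'"
  shows "W u S \<longleftrightarrow> W u' S"
proof -
  have *: "W a S \<longleftrightarrow> W b S" if a: "low a" and b: "low b" and ab: "a < b" for a b
    using W_up[OF a b ab, of S] W_up[OF a b ab, of "-S"] excl[OF a, of S] excl[OF b, of S] by blast
  show ?thesis
  proof (cases u u' rule: linorder_cases)
    case less then show ?thesis using *[OF u u'] by blast
  next
    case equal then show ?thesis by simp
  next
    case greater then show ?thesis using *[OF u' u] by blast
  qed
qed

lemma W_univ: "low a \<Longrightarrow> W a UNIV"
proof -
  assume a: "low a"
  then obtain c where aL: "a \<in> L" and c: "c \<in> L" "a < c" by (auto simp: low_def)
  have "F (\<psi> (bp a c UNIV)) a = 1"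
    by (rule pinned[OF bp_prof[OF aL c(1)] aL]) (use c aL in \<open>simp add: bp_cdf ind_def\<close>)
  moreover have "F (\<psi> (bp a c UNIV)) a = (if W a UNIV then 1 else 0)" using bp_val[OF aL c(1)] c by simp
  ultimately show ?thesis by (auto split: if_splits)
qed

lemma W_empty: "low a \<Longrightarrow> \<not> W a {}"
proof -
  assume a: "low a"
  then obtain c where aL: "a \<in> L" and c: "c \<in> L" "a < c" by (auto simp: low_def)
  have "F (\<psi> (bp a c {})) a = 0"
    by (rule pinned[OF bp_prof[OF aL c(1)] aL]) (use c aL in \<open>simp add: bp_cdf ind_def\<close>)
  moreover have "F (\<psi> (bp a c {})) a = (if W a {} then 1 else 0)" using bp_val[OF aL c(1)] c by simp
  ultimately show ?thesis by (auto split: if_splits)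
qed

lemma W_mono:
  assumes a: "low a" and WS: "W a S" and ST: "S \<subseteq> T"
  shows "W a T"
proof (rule ccontr)
  assume nT: "\<not> W a T"
  obtain c where aL: "a \<in> L" and c: "c \<in> L" "a < c" using a by (auto simp: low_def)
  define v where "v i = (if i \<in> S then 1 else if i \<in> T then 1/2 else (0::real))" for i
  have v01: "0 \<le> v i \<and> v i \<le> 1" for i by (auto simp: v_def)
  let ?P = "rp2 a c v"
  have P: "?P \<in> profiles L" by (rule rp2_prof[OF aL c(1) v01])
  have Pc: "F (?P i) a = v i" for i using rp2_cdf[OF aL c(1) c(2)] v01[of i] c by simp
  have BS: "F (\<psi> (bp a c S)) a = 1" using bp_val[OF aL c(1)] c WS by simp
  have BT: "F (\<psi> (bp a c T)) a = 0" using bp_val[OF aL c(1)] c nT by simp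
  have "F (\<psi> ?P) a = F (\<psi> (bp a c S)) a"
    by (rule T2[OF bp_prof[OF aL c(1)] P aL]) (use c aL BS in \<open>auto simp: ok_def Pc bp_cdf ind_def v_def\<close>)
  moreover have "F (\<psi> ?P) a = F (\<psi> (bp a c T)) a"
    by (rule T2[OF bp_prof[OF aL c(1)] P aL]) (use c aL BT ST in \<open>auto simp: ok_def Pc bp_cdf ind_def v_def\<close>)
  ultimately show False using BS BT by simp
qed

end



context agg begin

lemma W_inter:
  assumes a: "low a" and WS: "W a S" and WT: "W a T"
  shows "W a (S \<inter> T)"
proof (rule ccontr)
  assume nX: "\<not> W a (S \<inter> T)"
  define X where "X = S \<inter> T"
  define Y where "Y = S - T"
  have WXZ: "W a (X \<union> - S)" using W_mono[OF a WT, of "X \<union> - S"] unfolding X_def by blast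
  have WXY: "W a (X \<union> Y)" proof -
    have "X \<union> Y = S" unfolding X_def Y_def by blast
    then show ?thesis using WS by simp
  qed
  obtain c where aL: "a \<in> L" and c: "c \<in> L" "a < c" using a by (auto simp: low_def)
  define z where "z = (\<lambda>k::nat. a + real k * (c - a) / 6)"
  have zL: "\<And>k. k \<le> 6 \<Longrightarrow> z k \<in> L" and zlt: "\<And>k l. k < l \<Longrightarrow> z k < z l" and z6: "z 6 = c"
    using pts[OF aL c] unfolding z_def by auto
  have lowz: "k < 6 \<Longrightarrow> low (z k)" for k using zL[of k] zL[of 6] zlt[of k 6] by (auto simp: low_def)
  have lowzs: "low (z 0)" "low (z 1)" "low (z 2)" "low (z 3)" "low (z 4)" "low (z 5)" using lowz by auto
  have Wz: "k < 6 \<Longrightarrow> W (z k) S' \<longleftrightarrow> W a S'" for k S' using W_const[OF lowz a] by blast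
  have o: "z 0 < z 1" "z 1 < z 2" "z 2 < z 3" "z 3 < z 4" "z 4 < z 5" "z 5 < z 6" using zlt by auto
  have L: "z 0 \<in> L" "z 1 \<in> L" "z 2 \<in> L" "z 3 \<in> L" "z 4 \<in> L" "z 5 \<in> L" "z 6 \<in> L" using zL by auto
  define P where "P i = (if i \<in> X then mix L [(z 0, 1/2), (z 1, 1/2)] else if i \<in> Y then mix L [(z 3, 1/2), (z 4, 1/2)]
      else mix L [(z 2, 1/2), (z 5, 1/2)])" for i
  have P: "P \<in> profiles L" unfolding P_def using L by (intro prof_I) (auto intro: mixh_probs)
  have Pc: "F (P i) x = (if i \<in> X then (if x < z 0 then 0 else if x < z 1 then 1/2 else 1)
       else if i \<in> Y then (if x < z 3 then 0 else if x < z 4 then 1/2 else 1)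
       else (if x < z 2 then 0 else if x < z 5 then 1/2 else 1))" for i x
    unfolding P_def using L o by (auto simp: mixh_cdf)
  have XY: "X \<inter> Y = {}" "i \<notin> X \<Longrightarrow> i \<notin> Y \<Longrightarrow> i \<in> - S" "i \<in> Y \<Longrightarrow> i \<in> S" "i \<in> X \<Longrightarrow> i \<in> S" for i by (auto simp: X_def Y_def)
  have bpv: "k < 6 \<Longrightarrow> F (\<psi> (bp (z k) (z 6) S')) (z k) = (if W a S' then 1 else 0)" for k S'
    using bp_val[OF zL[of k] zL[of 6], of "z k" S'] zlt[of k 6] Wz[of k S'] by simp
  have bpc: "k < 6 \<Longrightarrow> F (bp (z k) (z 6) S' i) (z k) = ind S' i" for k S' i
    using bp_cdf[OF zL[of k] zL[of 6]] zlt[of k 6] by simp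
  have bpp: "k < 6 \<Longrightarrow> bp (z k) (z 6) S' \<in> profiles L" for k S' using bp_prof zL by simp
  have v1: "F (\<psi> P) (z 1) = 0"
  proof -
    have "F (\<psi> P) (z 1) = (if W (z 1) X then 1 else 0)"
      by (rule BIN[OF lowzs(2) P]) (use o in \<open>auto simp: Pc ind_def\<close>)
    then show ?thesis using Wz[of 1 X] nX X_def by simp
  qed
  have v0: "F (\<psi> P) (z 0) = 0"
    using cdf_mono[OF psi_probs[OF P], of "z 0" "z 1"] o v1 cdf_nonneg[of L "\<psi> P" "z 0"] by simp
  have v2: "F (\<psi> P) (z 2) = 1/2"
  proof -
    obtain i where i: "F (\<psi> P) (z 2) = F (P i) (z 2)" using C1'[OF lowzs(3) P] by blast
    have "F (\<psi> P) (z 2) \<noteq> 1"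
    proof
      assume h: "F (\<psi> P) (z 2) = 1"
      have "F (\<psi> (bp (z 2) (z 6) X)) (z 2) = F (\<psi> P) (z 2)"
        by (rule T2[OF P bpp L(3)]) (use o h XY in \<open>auto simp: ok_def Pc bpc ind_def\<close>)
      then show False using bpv[of 2 X] h nX X_def by simp
    qed
    moreover have "F (\<psi> P) (z 2) \<noteq> 0"
    proof
      assume h: "F (\<psi> P) (z 2) = 0"
      have "F (\<psi> (bp (z 2) (z 6) (X \<union> - S))) (z 2) = F (\<psi> P) (z 2)"
        by (rule T2[OF P bpp L(3)]) (use o h XY in \<open>auto simp: ok_def Pc bpc ind_def\<close>)
      then show False using bpv[of 2 "X \<union> - S"] h WXZ by simp
    qed
    ultimately show ?thesis using i o by (auto simp: Pc split: if_splits)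
  qed
  have v3: "F (\<psi> P) (z 3) = 1/2"
  proof -
    obtain i where i: "F (\<psi> P) (z 3) = F (P i) (z 3)" using C1'[OF lowzs(4) P] by blast
    have "F (\<psi> P) (z 3) \<noteq> 1"
    proof
      assume h: "F (\<psi> P) (z 3) = 1"
      have "F (\<psi> (bp (z 3) (z 6) X)) (z 3) = F (\<psi> P) (z 3)"
        by (rule T2[OF P bpp L(4)]) (use o h XY in \<open>auto simp: ok_def Pc bpc ind_def\<close>)
      then show False using bpv[of 3 X] h nX X_def by simp
    qed
    then show ?thesis using i o by (auto simp: Pc split: if_splits)
  qed
  have v4: "F (\<psi> P) (z 4) = 1"
  proof -
    have "F (\<psi> P) (z 4) = F (\<psi> (bp (z 4) (z 6) (X \<union> Y))) (z 4)"
      by (rule T2[OF bpp P L(5)]) (use o XY bpv[of 4 "X \<union> Y"] WXY in \<open>auto simp: ok_def Pc bpc ind_def\<close>)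
    then show ?thesis using bpv[of 4 "X \<union> Y"] WXY by simp
  qed
  have v5: "F (\<psi> P) (z 5) = 1"
    by (rule pinned[OF P L(6)]) (use o in \<open>auto simp: Pc\<close>)
  have pP: "\<psi> P \<in> probs L" by (rule psi_probs[OF P])
  define A where "A = ({x \<in> L. x \<le> z 0} \<union> {x \<in> L. z 2 < x \<and> x \<le> z 3}) \<union> {x \<in> L. z 4 < x \<and> x \<le> z 5}"
  have As: "A \<in> sets (restrict_space borel L)" unfolding A_def by (intro sets.Un) auto
  have "measure (\<psi> P) A = F (\<psi> P) (z 0) + (F (\<psi> P) (z 3) - F (\<psi> P) (z 2)) + (F (\<psi> P) (z 5) - F (\<psi> P) (z 4))"
    unfolding A_def using o
    by (subst meas_Un[OF pP], (auto)[3], subst meas_Un[OF pP]) (auto simp: Ioc_meas[OF pP] cdf_of_def)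
  then have "measure (\<psi> P) A = 0" using v0 v2 v3 v4 v5 by simp
  moreover have "measure (\<psi> P) A > 0"
  proof (rule SPP_D[OF P As])
    fix i show "measure (P i) A > 0"
      unfolding P_def using L o As by (auto simp: mixh_measure A_def)
  qed
  ultimately show False by simp
qed

end



lemma meas_id: "p \<in> probs L \<Longrightarrow> (\<lambda>x. x) \<in> measurable p borel"
proof -
  assume p: "p \<in> probs L"
  have "(\<lambda>x. x) \<in> borel_measurable (restrict_space borel L)" by (intro measurable_restrict_space1) simp
  then show ?thesis using probs_sets[OF p] measurable_cong_sets[of p "restrict_space borel L" borel borel] by simp
qed

lemma probs_eq:
  assumes ivl: "is_interval L" and p: "p \<in> probs L" and q: "q \<in> probs L"
    and eq: "\<And>a. a \<in> L \<Longrightarrow> cdf_of L p a = cdf_of L q a"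
  shows "p = q"
proof -
  define Dp where "Dp = distr p borel (\<lambda>x. x)"
  define Dq where "Dq = distr q borel (\<lambda>x. x)"
  have psp: "prob_space p" "prob_space q" using p q by (auto simp: probs_def)
  have rd: "real_distribution Dp" "real_distribution Dq"
    unfolding Dp_def Dq_def real_distribution_def real_distribution_axioms_def
    using prob_space.prob_space_distr[OF psp(1) meas_id[OF p]] prob_space.prob_space_distr[OF psp(2) meas_id[OF q]]
    by auto
  have all: "measure p {y \<in> L. y \<le> x} = measure q {y \<in> L. y \<le> x}" for x
  proof (cases "x \<in> L")
    case True then show ?thesis using eq[OF True] by (simp add: cdf_of_def)
  next
    case False
    show ?thesis
    proof (cases "\<exists>y\<in>L. y \<le> x")
      case True
      then obtain y where y: "y \<in> L" "y \<le> x" by blast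
      have "{y \<in> L. y \<le> x} = L"
      proof (auto)
        fix z assume z: "z \<in> L"
        show "z \<le> x"
        proof (rule ccontr)
          assume "\<not> z \<le> x"
          then have "x \<in> L" using ivl_mem[OF ivl y(1) z, of x] y by simp
          with False show False by simp
        qed
      qed
      then show ?thesis using prob_space.prob_space[OF psp(1)] prob_space.prob_space[OF psp(2)]
        probs_space[OF p] probs_space[OF q] by simp
    next
      case False
      then have "{y \<in> L. y \<le> x} = {}" by auto
      then show ?thesis by (simp only:) simp
    qed
  qed
  have cdfD: "cdf Dp x = measure p {y \<in> L. y \<le> x}" "cdf Dq x = measure q {y \<in> L. y \<le> x}" for x
  proof -
    have e: "{..x} \<inter> L = {y \<in> L. y \<le> x}" by auto
    have "cdf Dp x = measure p ({..x} \<inter> space p)" unfolding cdf_def2 Dp_def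
      by (subst measure_distr[OF meas_id[OF p]]) auto
    then show "cdf Dp x = measure p {y \<in> L. y \<le> x}" using probs_space[OF p] e by simp
    have "cdf Dq x = measure q ({..x} \<inter> space q)" unfolding cdf_def2 Dq_def
      by (subst measure_distr[OF meas_id[OF q]]) auto
    then show "cdf Dq x = measure q {y \<in> L. y \<le> x}" using probs_space[OF q] e by simp
  qed
  have "cdf Dp = cdf Dq"
  proof
    fix x show "cdf Dp x = cdf Dq x" using cdfD[of x] all[of x] by simp
  qed
  then have "Dp = Dq" by (rule cdf_unique[OF rd])
  show "p = q"
  proof (rule measure_eqI)
    show "sets p = sets q" using p q by (simp add: probs_sets)
  next
    fix A assume A: "A \<in> sets p"
    then have "A \<in> (\<inter>) L ` sets borel" using probs_sets[OF p] by (simp add: sets_restrict_space)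
    then obtain B where B: "B \<in> sets borel" "A = L \<inter> B" by auto
    have ep: "(\<lambda>x. x) -` B \<inter> space p = A" using B probs_space[OF p] by auto
    have m1: "emeasure Dp B = emeasure p A" unfolding Dp_def
      using emeasure_distr[OF meas_id[OF p] B(1)] ep by simp
    have eq: "(\<lambda>x. x) -` B \<inter> space q = A" using B probs_space[OF q] by auto
    moreover have "emeasure Dq B = emeasure q A" unfolding Dq_def
      using emeasure_distr[OF meas_id[OF q] B(1)] eq by simp
    ultimately show "emeasure p A = emeasure q A" using \<open>Dp = Dq\<close> m1 by simp
  qed
qed

context agg begin

lemma principal:
  assumes a0: "low a0"
  shows "\<exists>d. \<forall>S. W a0 S \<longleftrightarrow> d \<in> S"
proof -
  define k where "k = (LEAST k. \<exists>S. W a0 S \<and> card S = k)"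
  have "\<exists>S. W a0 S \<and> card S = k" unfolding k_def
    by (rule LeastI_ex) (use W_univ[OF a0] in blast)
  then obtain D where D: "W a0 D" "card D = k" by blast
  have kmin: "W a0 S \<Longrightarrow> k \<le> card S" for S unfolding k_def by (rule Least_le) blast
  have "D \<noteq> {}" using D W_empty[OF a0] by auto
  then obtain d where d: "d \<in> D" by blast
  have single: "d' = d" if d': "d' \<in> D" for d'
  proof (rule ccontr)
    assume ne: "d' \<noteq> d"
    have cD: "card (D - {d'}) < card D" using d' by (intro card_Diff1_less) auto
    show False
    proof (cases "W a0 (D - {d'})")
      case True then show False using kmin[OF True] cD D by simp
    next
      case False
      then have "W a0 (- (D - {d'}))" using excl[OF a0, of "D - {d'}"] by simp
      then have "W a0 (D \<inter> - (D - {d'}))" using W_inter[OF a0 D(1)] by blast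
      moreover have "D \<inter> - (D - {d'}) = {d'}" using d' by auto
      ultimately have W1: "W a0 {d'}" by simp
      have "{d, d'} \<subseteq> D" using d d' by auto
      then have "card {d, d'} \<le> card D" by (intro card_mono) auto
      then have "2 \<le> card D" using ne by simp
      then show False using kmin[OF W1] D by simp
    qed
  qed
  have Dd: "D = {d}" using single d by blast
  show ?thesis
  proof (rule exI[of _ d], intro allI iffI)
    fix S assume "W a0 S"
    show "d \<in> S"
    proof (rule ccontr)
      assume "d \<notin> S"
      then have "S \<inter> D = {}" using Dd by blast
      then show False using W_inter[OF a0 \<open>W a0 S\<close> D(1)] W_empty[OF a0] by simp
    qed
  next
    fix S assume "d \<in> S"
    then show "W a0 S" using W_mono[OF a0 D(1), of S] Dd by blast
  qed
qed

lemma dict_low: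
  assumes a: "low a" and Wd: "\<And>S. W a S \<longleftrightarrow> d \<in> S" and ps: "ps \<in> profiles L"
  shows "F (\<psi> ps) a = F (ps d) a"
proof (rule ccontr)
  assume H: "F (\<psi> ps) a \<noteq> F (ps d) a"
  obtain c where aL: "a \<in> L" and c: "c \<in> L" "a < c" using a by (auto simp: low_def)
  define t where "t = F (\<psi> ps) a"
  define v where "v i = F (ps i) a" for i
  have v01: "0 \<le> v i" "v i \<le> 1" for i unfolding v_def by (auto intro: cdf_nonneg cdf_le1 prof_D[OF ps])
  have t01: "0 \<le> t" "t \<le> 1" unfolding t_def by (auto intro: cdf_nonneg cdf_le1 psi_probs[OF ps])
  define g where "g i = (if v i < t then 0 else if v i > t then 1 else t)" for i
  have g01: "0 \<le> g i \<and> g i \<le> 1" for i using t01 by (auto simp: g_def)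
  have G: "rp2 a c g \<in> profiles L" by (rule rp2_prof[OF aL c(1) g01])
  have Gc: "F (rp2 a c g i) a = g i" for i using rp2_cdf[OF aL c(1) c(2)] g01[of i] c by simp
  have Gt: "F (\<psi> (rp2 a c g)) a = t" unfolding t_def
  proof (rule T2[OF ps G aL])
    fix i show "ok (F (\<psi> ps) a) (F (ps i) a) (F (rp2 a c g i) a)"
      using v01[of i] unfolding v_def[symmetric] t_def[symmetric] by (auto simp: ok_def Gc g_def)
  qed
  have bpc: "F (bp a c S i) a = ind S i" for S i using bp_cdf[OF aL c(1) c(2)] c by simp
  have bpv: "F (\<psi> (bp a c S)) a = (if d \<in> S then 1 else 0)" for S using bp_val[OF aL c(1)] c Wd by simp
  show False
  proof (cases "v d > t")
    case True
    let ?S = "{i. v i > t}"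
    have "F (\<psi> (rp2 a c g)) a = F (\<psi> (bp a c ?S)) a"
    proof (rule T2[OF bp_prof[OF aL c(1)] G aL])
      fix i show "ok (F (\<psi> (bp a c ?S)) a) (F (bp a c ?S i) a) (F (rp2 a c g i) a)"
        using True v01[of i] v01[of d] bpv[of ?S] t01 by (auto simp: ok_def Gc bpc ind_def g_def)
    qed
    then show False using Gt bpv True v01[of d] by simp
  next
    case False
    then have lt: "v d < t" using H unfolding v_def t_def by simp
    let ?S = "{i. v i \<ge> t}"
    have "F (\<psi> (rp2 a c g)) a = F (\<psi> (bp a c ?S)) a"
    proof (rule T2[OF bp_prof[OF aL c(1)] G aL])
      fix i show "ok (F (\<psi> (bp a c ?S)) a) (F (bp a c ?S i) a) (F (rp2 a c g i) a)"
        using lt v01[of i] v01[of d] bpv[of ?S] t01 by (auto simp: ok_def Gc bpc ind_def g_def)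
    qed
    then show False using Gt bpv lt v01[of d] by simp
  qed
qed

lemma dictatorial_main:
  assumes ne: "\<exists>x\<in>L. \<exists>y\<in>L. x \<noteq> y"
  shows "dictatorial L \<psi>"
proof -
  obtain x y where xy: "x \<in> L" "y \<in> L" "x < y" using ne by (metis linorder_neqE_linordered_idom)
  have a0: "low x" using xy by (auto simp: low_def)
  obtain d where d: "\<And>S. W x S \<longleftrightarrow> d \<in> S" using principal[OF a0] by blast
  show ?thesis unfolding dictatorial_def
  proof (intro exI ballI)
    fix ps :: "'n \<Rightarrow> real measure" assume ps: "ps \<in> profiles L"
    show "\<psi> ps = ps d"
    proof (rule probs_eq[OF ivl psi_probs[OF ps] prof_D[OF ps]])
      fix a assume a: "a \<in> L"
      show "F (\<psi> ps) a = F (ps d) a"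
      proof (cases "low a")
        case True
        show ?thesis by (rule dict_low[OF True _ ps]) (use W_const[OF True a0] d in blast)
      next
        case False
        then have "{z \<in> L. z \<le> a} = L" using a by (auto simp: low_def not_less)
        moreover have "measure p L = 1" if "p \<in> probs L" for p
          using prob_space.prob_space[of p] probs_space[OF that] that by (simp add: probs_def)
        ultimately show ?thesis unfolding cdf_of_def using psi_probs[OF ps] prof_D[OF ps] by simp
      qed
    qed
  qed
qed

end



theorem mainTheorem7:
  fixes L :: "real set"
    and \<psi> :: "('n::finite \<Rightarrow> real measure) \<Rightarrow> real measure"
  assumes "is_interval L"
    and "\<exists>x \<in> L. \<exists>y \<in> L. x \<noteq> y"
    and "is_PAF L \<psi>"
  shows "(level_SP L \<psi> \<and> unanimous L \<psi> \<and> strong_plausibility_preserving L \<psi>)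
           \<longleftrightarrow> dictatorial L \<psi>"
proof
  assume H: "level_SP L \<psi> \<and> unanimous L \<psi> \<and> strong_plausibility_preserving L \<psi>"
  interpret agg L \<psi> using assms H by unfold_locales auto
  show "dictatorial L \<psi>" by (rule dictatorial_main[OF assms(2)])
next
  assume "dictatorial L \<psi>"
  then obtain d where d: "\<And>ps. ps \<in> profiles L \<Longrightarrow> \<psi> ps = ps d"
    unfolding dictatorial_def by blast
  have upd: "ps \<in> profiles L \<Longrightarrow> q \<in> probs L \<Longrightarrow> ps(i := q) \<in> profiles L" for ps q i
    by (auto simp: profiles_def)
  have "level_SP L \<psi>"
    unfolding level_SP_def
  proof (intro allI ballI conjI impI)
    fix i :: 'n and ps :: "'n \<Rightarrow> real measure" and q a assume ps: "ps \<in> profiles L" and q: "q \<in> probs L" and a: "a \<in> L"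
    {
      assume lt: "cdf_of L (ps i) a < cdf_of L (\<psi> ps) a"
      then have "i \<noteq> d" using d[OF ps] by auto
      then show "cdf_of L (\<psi> ps) a \<le> cdf_of L (\<psi> (ps(i := q))) a"
        using d[OF ps] d[OF upd[OF ps q]] by simp
    next
      assume lt: "cdf_of L (ps i) a > cdf_of L (\<psi> ps) a"
      then have "i \<noteq> d" using d[OF ps] by auto
      then show "cdf_of L (\<psi> ps) a \<ge> cdf_of L (\<psi> (ps(i := q))) a"
        using d[OF ps] d[OF upd[OF ps q]] by simp
    }
  qed
  moreover have "unanimous L \<psi>"
    unfolding unanimous_def
  proof
    fix p assume "p \<in> probs L"
    then have "(\<lambda>_::'n. p) \<in> profiles L" by (simp add: profiles_def)
    then show "\<psi> (\<lambda>_. p) = p" using d by simp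
  qed
  moreover have "strong_plausibility_preserving L \<psi>"
    unfolding strong_plausibility_preserving_def using d by auto
  ultimately show "level_SP L \<psi> \<and> unanimous L \<psi> \<and> strong_plausibility_preserving L \<psi>" by blast
qed

end
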